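(* Let $\alpha,\mu,\gamma>0$ and consider on the simplex $\Sigma=\{(L,R)\in\mathbb{R}^2: L\ge 0,\ R\ge 0,\ L+R\le 1\}$ the system \[ \dot L=\alpha L C-\mu L+\gamma R C,\qquad \dot R=\alpha R C-\mu R+\gamma L C,\qquad C=1-L-R. \] Set $\beta=\alpha+\gamma$. Then: (1) If $\beta\le\mu$, the equilibrium $E_0=(0,0)$ is globally asymptotically stable on $\Sigma$; in particular $L(t),R(t)\to 0$ and $C(t)\to 1$ for every solution starting in $\Sigma$. (2) If $\beta>\mu$, the point $E_1=(P^*,P^* )$ with $P^*=\tfrac12(1-\mu/\beta)$ (so that $C^*=1-2P^*=\mu/\beta$) is the unique interior equilibrium, it is globally asymptotically stable on $\Sigma\setminus\{E_0\}$, and $E_0$ is unstable. *)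

theory Defs
  imports "HOL-Analysis.Analysis"
begin

definition vf :: "real \<Rightarrow> real \<Rightarrow> real \<Rightarrow> real \<times> real \<Rightarrow> real \<times> real" where
  "vf \<alpha> \<mu> \<gamma> p = (let L = fst p; R = snd p; C = 1 - L - R in
      (\<alpha> * L * C - \<mu> * L + \<gamma> * R * C, \<alpha> * R * C - \<mu> * R + \<gamma> * L * C))"

definition Sigma_simplex :: "(real \<times> real) set" where
  "Sigma_simplex = {(L, R). L \<ge> 0 \<and> R \<ge> 0 \<and> L + R \<le> 1}"

definition is_solution :: "real \<Rightarrow> real \<Rightarrow> real \<Rightarrow> (real \<Rightarrow> real \<times> real) \<Rightarrow> bool" where
  "is_solution \<alpha> \<mu> \<gamma> x \<longleftrightarrow>
     (\<forall>t\<ge>0. (x has_vector_derivative vf \<alpha> \<mu> \<gamma> (x t)) (at t within {0..}))"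

definition stable_on :: "real \<Rightarrow> real \<Rightarrow> real \<Rightarrow> (real \<times> real) set \<Rightarrow> real \<times> real \<Rightarrow> bool" where
  "stable_on \<alpha> \<mu> \<gamma> S e \<longleftrightarrow>
     (\<forall>\<epsilon>>0. \<exists>\<delta>>0. \<forall>x. is_solution \<alpha> \<mu> \<gamma> x \<and> x 0 \<in> S \<and> dist (x 0) e < \<delta>
        \<longrightarrow> (\<forall>t\<ge>0. dist (x t) e < \<epsilon>))"

definition attractive_on :: "real \<Rightarrow> real \<Rightarrow> real \<Rightarrow> (real \<times> real) set \<Rightarrow> real \<times> real \<Rightarrow> bool" where
  "attractive_on \<alpha> \<mu> \<gamma> S e \<longleftrightarrow>
     (\<forall>x. is_solution \<alpha> \<mu> \<gamma> x \<and> x 0 \<in> S \<longrightarrow> (x \<longlongrightarrow> e) at_top)"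

definition GAS_on :: "real \<Rightarrow> real \<Rightarrow> real \<Rightarrow> (real \<times> real) set \<Rightarrow> real \<times> real \<Rightarrow> bool" where
  "GAS_on \<alpha> \<mu> \<gamma> S e \<longleftrightarrow>
     vf \<alpha> \<mu> \<gamma> e = 0 \<and> stable_on \<alpha> \<mu> \<gamma> S e \<and> attractive_on \<alpha> \<mu> \<gamma> S e"

end

theory Submission
  imports Defs
begin


lemma mult_form:
  fixes f h :: "real \<Rightarrow> real"
  assumes d: "\<And>t. t \<ge> a \<Longrightarrow> (f has_real_derivative f t * h t) (at t within {a..})"
    and c: "continuous_on {a..} h" and t: "t \<ge> a"
  shows "f t = f a * exp (integral {a..t} h)"
proof -
  let ?H = "\<lambda>u. integral {a..u} h"
  have "\<exists>k. \<forall>u\<in>{a..t}. f u * exp (- ?H u) = k"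
  proof (rule has_field_derivative_zero_constant)
    show "convex {a..t}" by simp
    fix u assume u: "u \<in> {a..t}"
    have cH: "(?H has_real_derivative h u) (at u within {a..t})"
      using integral_has_real_derivative[of a t h u] c u continuous_on_subset[of "{a..}" h "{a..t}"] by auto
    have df: "(f has_real_derivative f u * h u) (at u within {a..t})"
      using d[of u] u by (auto intro: has_field_derivative_subset)
    show "((\<lambda>u. f u * exp (- ?H u)) has_field_derivative 0) (at u within {a..t})"
      by (rule derivative_eq_intros df cH refl | simp add: algebra_simps)+
  qed
  then obtain k where k: "\<forall>u\<in>{a..t}. f u * exp (- ?H u) = k" by blast
  have "f t * exp (- ?H t) = f a" using k t by force
  then show ?thesis by (simp add: exp_minus field_simps)
qed

lemma lin_form:
  fixes f :: "real \<Rightarrow> real"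
  assumes d: "\<And>t. t \<ge> a \<Longrightarrow> (f has_real_derivative c) (at t within {a..})"
    and t: "t \<ge> a"
  shows "f t = f a + c * (t - a)"
proof -
  have "\<exists>k. \<forall>u\<in>{a..t}. f u - c * u = k"
  proof (rule has_field_derivative_zero_constant)
    show "convex {a..t}" by simp
    fix u assume u: "u \<in> {a..t}"
    have df: "(f has_real_derivative c) (at u within {a..t})"
      using d[of u] u by (auto intro: has_field_derivative_subset)
    show "((\<lambda>u. f u - c * u) has_field_derivative 0) (at u within {a..t})"
      by (rule derivative_eq_intros df refl | simp)+
  qed
  then obtain k where k: "\<forall>u\<in>{a..t}. f u - c * u = k" by blast
  then show ?thesis using t by (force simp: algebra_simps)
qed

lemma comp_derivs:
  assumes "is_solution \<alpha> \<mu> \<gamma> x" "t \<ge> 0"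
  shows "((\<lambda>t. fst (x t)) has_real_derivative fst (vf \<alpha> \<mu> \<gamma> (x t))) (at t within {0..})"
    and "((\<lambda>t. snd (x t)) has_real_derivative snd (vf \<alpha> \<mu> \<gamma> (x t))) (at t within {0..})"
proof -
  let ?v = "vf \<alpha> \<mu> \<gamma> (x t)"
  have xd: "(x has_derivative (\<lambda>h. h *\<^sub>R ?v)) (at t within {0..})"
    using assms unfolding is_solution_def has_vector_derivative_def by auto
  have "((\<lambda>y. fst (x y)) has_derivative (\<lambda>h. fst (h *\<^sub>R ?v))) (at t within {0..})"
    by (rule has_derivative_fst[OF xd])
  then have "((\<lambda>y. fst (x y)) has_derivative (\<lambda>h. h * fst ?v)) (at t within {0..})" by simp
  then show "((\<lambda>t. fst (x t)) has_real_derivative fst ?v) (at t within {0..})"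
    unfolding has_field_derivative_def by (simp add: mult_commute_abs)
  have "((\<lambda>y. snd (x y)) has_derivative (\<lambda>h. snd (h *\<^sub>R ?v))) (at t within {0..})"
    by (rule has_derivative_snd[OF xd])
  then have "((\<lambda>y. snd (x y)) has_derivative (\<lambda>h. h * snd ?v)) (at t within {0..})" by simp
  then show "((\<lambda>t. snd (x t)) has_real_derivative snd ?v) (at t within {0..})"
    unfolding has_field_derivative_def by (simp add: mult_commute_abs)
qed


lemma lin_at_top: "(a::real) > 0 \<Longrightarrow> filterlim (\<lambda>t::real. c + a * t) at_top at_top"
  by (rule filterlim_tendsto_add_at_top[OF tendsto_const])
     (rule filterlim_tendsto_pos_mult_at_top[OF tendsto_const _ filterlim_ident])

lemma exp_decay: assumes "(a::real) > 0" shows "((\<lambda>t::real. exp (c - a * t)) \<longlongrightarrow> 0) at_top"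
proof -
  have "filterlim (\<lambda>t. exp (- c + a * t)) at_top at_top"
    by (rule filterlim_compose[OF exp_at_top lin_at_top[OF assms]])
  from tendsto_inverse_0_at_top[OF this] show ?thesis
    by (simp add: exp_minus[symmetric])
qed



locale sol =
  fixes \<alpha> \<mu> \<gamma> :: real and x :: "real \<Rightarrow> real \<times> real"
  assumes pos: "\<alpha> > 0" "\<mu> > 0" "\<gamma> > 0"
    and issol: "is_solution \<alpha> \<mu> \<gamma> x" and init: "x 0 \<in> Sigma_simplex"
begin

definition "L t = fst (x t)"
definition "R t = snd (x t)"
definition "S t = L t + R t"
definition "D t = L t - R t"
definition "b = \<alpha> + \<gamma>"
definition "k = b - \<mu>"

lemma S_fun: "S = (\<lambda>t. fst (x t) + snd (x t))" by (rule ext) (simp add: S_def L_def R_def)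
lemma D_fun: "D = (\<lambda>t. fst (x t) - snd (x t))" by (rule ext) (simp add: D_def L_def R_def)

lemma dS: "t \<ge> 0 \<Longrightarrow> (S has_real_derivative S t * (b * (1 - S t) - \<mu>)) (at t within {0..})"
proof -
  assume t: "t \<ge> 0"
  have "(S has_real_derivative fst (vf \<alpha> \<mu> \<gamma> (x t)) + snd (vf \<alpha> \<mu> \<gamma> (x t))) (at t within {0..})"
    unfolding S_fun by (intro DERIV_add comp_derivs issol t)
  moreover have "fst (vf \<alpha> \<mu> \<gamma> (x t)) + snd (vf \<alpha> \<mu> \<gamma> (x t)) = S t * (b * (1 - S t) - \<mu>)"
    by (simp add: vf_def Let_def S_def L_def R_def b_def algebra_simps)
  ultimately show ?thesis by simp
qed

lemma dD: "t \<ge> 0 \<Longrightarrow> (D has_real_derivative D t * ((\<alpha> - \<gamma>) * (1 - S t) - \<mu>)) (at t within {0..})"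
proof -
  assume t: "t \<ge> 0"
  have "(D has_real_derivative fst (vf \<alpha> \<mu> \<gamma> (x t)) - snd (vf \<alpha> \<mu> \<gamma> (x t))) (at t within {0..})"
    unfolding D_fun by (intro DERIV_diff comp_derivs issol t)
  moreover have "fst (vf \<alpha> \<mu> \<gamma> (x t)) - snd (vf \<alpha> \<mu> \<gamma> (x t)) = D t * ((\<alpha> - \<gamma>) * (1 - S t) - \<mu>)"
    by (simp add: vf_def Let_def S_def D_def L_def R_def algebra_simps)
  ultimately show ?thesis by simp
qed

lemma contS: "continuous_on {0..} S"
  unfolding continuous_on_eq_continuous_within
proof
  fix t :: real assume "t \<in> {0..}"
  then show "continuous (at t within {0..}) S" using DERIV_continuous[OF dS[of t]] by simp
qed

lemma contD: "continuous_on {0..} D"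
  unfolding continuous_on_eq_continuous_within
proof
  fix t :: real assume "t \<in> {0..}"
  then show "continuous (at t within {0..}) D" using DERIV_continuous[OF dD[of t]] by simp
qed

lemma init': "L 0 \<ge> 0" "R 0 \<ge> 0" "S 0 \<le> 1" "\<bar>D 0\<bar> \<le> S 0"
  using init by (auto simp: Sigma_simplex_def L_def R_def S_def D_def split: prod.splits)

lemma x_eq: "x t = (L t, R t)" by (simp add: L_def R_def)
lemma LR: "L t = (S t + D t) / 2" "R t = (S t - D t) / 2" by (simp_all add: S_def D_def)

lemma S_form: "t \<ge> 0 \<Longrightarrow> S t = S 0 * exp (integral {0..t} (\<lambda>s. b * (1 - S s) - \<mu>))"
  by (rule mult_form[OF dS]) (auto intro!: continuous_intros contS)

lemma D_form: "t \<ge> 0 \<Longrightarrow> D t = D 0 * exp (integral {0..t} (\<lambda>s. (\<alpha> - \<gamma>) * (1 - S s) - \<mu>))"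
  by (rule mult_form[OF dD]) (auto intro!: continuous_intros contS)

lemma zero_case: assumes "S 0 = 0" "t \<ge> 0" shows "L t = 0" "R t = 0"
proof -
  have "D 0 = 0" using init' assms by simp
  then have "D t = 0" "S t = 0" using D_form[of t] S_form[of t] assms by simp_all
  then show "L t = 0" "R t = 0" using LR[of t] by simp_all
qed

context
  assumes S0: "S 0 > 0"
begin

lemma Spos: "t \<ge> 0 \<Longrightarrow> S t > 0"
  using S_form[of t] S0 by (metis exp_gt_zero mult_pos_pos)

definition "V t = 1 / S t - 1"

lemma dV: "t \<ge> 0 \<Longrightarrow> (V has_real_derivative \<mu> + (\<mu> - b) * V t) (at t within {0..})"
proof -
  assume t: "t \<ge> 0"
  have V_fun: "V = (\<lambda>t. 1 / S t - 1)" by (rule ext) (simp add: V_def)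
  have ne: "S t \<noteq> 0" using Spos t by force
  have "(V has_real_derivative (0 * S t - 1 * (S t * (b * (1 - S t) - \<mu>))) / (S t * S t) - 0) (at t within {0..})"
    unfolding V_fun by (intro DERIV_diff DERIV_divide DERIV_const dS t ne)
  moreover have "(0 * S t - 1 * (S t * (b * (1 - S t) - \<mu>))) / (S t * S t) - 0 = \<mu> + (\<mu> - b) * V t"
    using ne by (simp add: V_def field_simps)
  ultimately show ?thesis by simp
qed


lemma V_form: assumes "k \<noteq> 0" "t \<ge> 0" shows "V t = \<mu>/k + (V 0 - \<mu>/k) * exp (- k * t)"
proof -
  let ?W = "\<lambda>t. V t - \<mu>/k"
  have "?W t = ?W 0 * exp (integral {0..t} (\<lambda>_. - k))"
  proof (rule mult_form)
    fix s :: real assume s: "s \<ge> 0"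
    have "(?W has_real_derivative (\<mu> + (\<mu> - b) * V s) - 0) (at s within {0..})"
      by (intro DERIV_diff dV s DERIV_const)
    moreover have "(\<mu> + (\<mu> - b) * V s) - 0 = ?W s * (- k)"
      using assms(1) by (simp add: k_def field_simps)
    ultimately show "(?W has_real_derivative ?W s * (- k)) (at s within {0..})" by simp
  qed (use assms in auto)
  then show ?thesis using assms by (simp add: algebra_simps)
qed

lemma V_form0: assumes "k = 0" "t \<ge> 0" shows "V t = V 0 + \<mu> * t"
proof -
  have "V t = V 0 + \<mu> * (t - 0)"
  proof (rule lin_form)
    fix s :: real assume s: "s \<ge> 0"
    show "(V has_real_derivative \<mu>) (at s within {0..})"
      using dV[OF s] assms by (simp add: k_def)
  qed (use assms in auto)
  then show ?thesis by simp
qed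

lemma S_V: "t \<ge> 0 \<Longrightarrow> S t = 1 / (1 + V t)"
  using Spos[of t] by (simp add: V_def)

lemma V0_nonneg: "V 0 \<ge> 0"
  using S0 init' by (simp add: V_def)

lemma V_nonneg: assumes t: "t \<ge> 0" shows "V t \<ge> 0"
proof (cases "k = 0")
  case True then show ?thesis using V_form0[OF True t] V0_nonneg pos t by simp
next
  case False
  note F = V_form[OF False t]
  show ?thesis
  proof (cases "k > 0")
    case True
    have e: "exp (- k * t) \<le> 1" "exp (- k * t) > 0" using True t by auto
    have "V t = \<mu>/k * (1 - exp (- k * t)) + V 0 * exp (- k * t)" using F by (simp add: algebra_simps)
    also have "\<dots> \<ge> 0" using e True pos V0_nonneg by (intro add_nonneg_nonneg mult_nonneg_nonneg) auto
    finally show ?thesis .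
  next
    case kn: False
    then have kneg: "k < 0" using False by simp
    have e: "exp (- k * t) \<ge> 1" using kneg t by (simp add: mult_nonpos_nonneg)
    have m: "\<mu>/k < 0" using kneg pos by (simp add: divide_pos_neg)
    have "(V 0 - \<mu>/k) * 1 \<le> (V 0 - \<mu>/k) * exp (- k * t)"
      using e m V0_nonneg by (intro mult_left_mono) auto
    then show ?thesis using F V0_nonneg by simp
  qed
qed

lemma S_le1: "t \<ge> 0 \<Longrightarrow> S t \<le> 1"
  using S_V[of t] V_nonneg[of t] by simp

definition "q t = D t / S t"

lemma dq: assumes t: "t \<ge> 0" shows "(q has_real_derivative q t * (- 2 * \<gamma> * (1 - S t))) (at t within {0..})"
proof -
  have q_fun: "q = (\<lambda>t. D t / S t)" by (rule ext) (simp add: q_def)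
  have ne: "S t \<noteq> 0" using Spos[OF t] by simp
  have "(q has_real_derivative (D t * ((\<alpha> - \<gamma>) * (1 - S t) - \<mu>) * S t - D t * (S t * (b * (1 - S t) - \<mu>))) / (S t * S t)) (at t within {0..})"
    unfolding q_fun by (intro DERIV_divide dD dS t ne)
  moreover have "(D t * ((\<alpha> - \<gamma>) * (1 - S t) - \<mu>) * S t - D t * (S t * (b * (1 - S t) - \<mu>))) / (S t * S t) = q t * (- 2 * \<gamma> * (1 - S t))"
    using ne by (simp add: q_def b_def field_simps)
  ultimately show ?thesis by simp
qed

lemma q_form: "t \<ge> 0 \<Longrightarrow> q t = q 0 * exp (integral {0..t} (\<lambda>s. - 2 * \<gamma> * (1 - S s)))"
  by (rule mult_form[OF dq]) (auto intro!: continuous_intros contS)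

lemma int_nonpos: assumes t: "t \<ge> 0" shows "integral {0..t} (\<lambda>s. - 2 * \<gamma> * (1 - S s)) \<le> 0"
proof -
  have c: "continuous_on {0..t} (\<lambda>s. - 2 * \<gamma> * (1 - S s))"
    by (intro continuous_intros continuous_on_subset[OF contS]) auto
  have "integral {0..t} (\<lambda>s. - 2 * \<gamma> * (1 - S s)) \<le> integral {0..t} (\<lambda>s. 0::real)"
    by (rule integral_le) (use integrable_continuous_interval[OF c] S_le1 pos in \<open>auto simp: mult_le_0_iff\<close>)
  then show ?thesis by simp
qed

lemma q_bound: "t \<ge> 0 \<Longrightarrow> \<bar>q t\<bar> \<le> \<bar>q 0\<bar>"
proof -
  assume t: "t \<ge> 0"
  have "\<bar>q t\<bar> = \<bar>q 0\<bar> * exp (integral {0..t} (\<lambda>s. - 2 * \<gamma> * (1 - S s)))"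
    using q_form[OF t] by (simp add: abs_mult)
  also have "\<dots> \<le> \<bar>q 0\<bar> * 1" using int_nonpos[OF t] by (intro mult_left_mono) auto
  finally show ?thesis by simp
qed

lemma q0_bound: "\<bar>q 0\<bar> \<le> 1"
proof -
  have "\<bar>q 0\<bar> = \<bar>D 0\<bar> / S 0" using S0 by (simp add: q_def)
  then show ?thesis using init'(4) S0 by (simp add: pos_divide_le_eq)
qed

lemma D_bound: "t \<ge> 0 \<Longrightarrow> \<bar>D t\<bar> \<le> S t * \<bar>q 0\<bar>"
proof -
  assume t: "t \<ge> 0"
  have "D t = q t * S t" using Spos[OF t] by (simp add: q_def)
  then have "\<bar>D t\<bar> = \<bar>q t\<bar> * S t" using Spos[OF t] by (simp add: abs_mult)
  also have "\<dots> \<le> \<bar>q 0\<bar> * S t" using q_bound[OF t] Spos[OF t] by (intro mult_right_mono) auto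
  finally show ?thesis by (simp add: mult.commute)
qed

lemma in_Sigma_pos: "t \<ge> 0 \<Longrightarrow> x t \<in> Sigma_simplex"
proof -
  assume t: "t \<ge> 0"
  have "\<bar>D t\<bar> \<le> S t" using D_bound[OF t] q0_bound Spos[OF t]
    by (metis mult_left_le order_trans less_eq_real_def abs_ge_zero)
  then show ?thesis using S_le1[OF t] LR[of t] x_eq[of t] by (auto simp: Sigma_simplex_def)
qed

end

lemma in_Sigma: "t \<ge> 0 \<Longrightarrow> x t \<in> Sigma_simplex"
proof -
  assume t: "t \<ge> 0"
  have "S 0 \<ge> 0" using init' by (simp add: S_def)
  then show ?thesis
  proof (cases "S 0 = 0")
    case True then show ?thesis using zero_case[OF True t] x_eq[of t] by (simp add: Sigma_simplex_def)
  qed (use in_Sigma_pos t in auto)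
qed


lemma a_mono: assumes "k \<le> 0" "t \<ge> 0" shows "S t \<le> S 0"
proof -
  have "S 0 \<ge> 0" using init' by (simp add: S_def)
  then show ?thesis
  proof (cases "S 0 = 0")
    case True then show ?thesis using zero_case[OF True assms(2)] by (simp add: S_def)
  next
    case False
    then have S0: "S 0 > 0" using \<open>S 0 \<ge> 0\<close> by simp
    have "V t \<ge> V 0"
    proof (cases "k = 0")
      case True then show ?thesis using V_form0[OF S0 True assms(2)] pos assms by simp
    next
      case kn: False
      then have kneg: "k < 0" using assms by simp
      have e: "exp (- k * t) \<ge> 1" using kneg assms by (simp add: mult_nonpos_nonneg)
      have m: "\<mu>/k < 0" using kneg pos by (simp add: divide_pos_neg)
      have "(V 0 - \<mu>/k) * 1 \<le> (V 0 - \<mu>/k) * exp (- k * t)"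
        using e m V0_nonneg[OF S0] by (intro mult_left_mono) auto
      then show ?thesis using V_form[OF S0 kn assms(2)] by simp
    qed
    then show ?thesis using S_V[OF S0 assms(2)] S_V[OF S0, of 0] V_nonneg[OF S0, of 0]
      by (simp add: frac_le)
  qed
qed

lemma a_lim: assumes "k \<le> 0" shows "(S \<longlongrightarrow> 0) at_top"
proof -
  have "S 0 \<ge> 0" using init' by (simp add: S_def)
  then show ?thesis
  proof (cases "S 0 = 0")
    case True
    have "eventually (\<lambda>t. 0 = S t) at_top"
      using eventually_ge_at_top[of 0] by eventually_elim (use zero_case[OF True] in \<open>simp add: S_def\<close>)
    then have "eventually (\<lambda>t. S t = 0) at_top" by (auto elim: eventually_mono)
    then show ?thesis by (rule tendsto_eventually)
  next
    case False
    then have S0: "S 0 > 0" using \<open>S 0 \<ge> 0\<close> by simp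
    have lim: "filterlim (\<lambda>t. 1 + V t) at_top at_top"
    proof (cases "k = 0")
      case True
      have "filterlim (\<lambda>t. (1 + V 0) + \<mu> * t) at_top at_top" by (rule lin_at_top) (use pos in simp)
      then show ?thesis
      proof (rule filterlim_cong[THEN iffD1, OF refl refl, rotated])
        show "eventually (\<lambda>t. (1 + V 0) + \<mu> * t = 1 + V t) at_top"
          using eventually_ge_at_top[of 0]
        proof (rule eventually_mono)
          fix t :: real assume "t \<ge> 0" then show "(1 + V 0) + \<mu> * t = 1 + V t"
            using V_form0[OF S0 True, of t] by linarith
        qed
      qed
    next
      case kn: False
      then have kneg: "k < 0" using assms by simp
      have m: "\<mu>/k < 0" using kneg pos by (simp add: divide_pos_neg)
      have c: "V 0 - \<mu>/k > 0" using m V0_nonneg[OF S0] by simp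
      have "filterlim (\<lambda>t. exp (0 + (- k) * t)) at_top at_top"
        by (rule filterlim_compose[OF exp_at_top lin_at_top]) (use kneg in simp)
      then have "filterlim (\<lambda>t. (V 0 - \<mu>/k) * exp (0 + (- k) * t)) at_top at_top"
        by (rule filterlim_tendsto_pos_mult_at_top[OF tendsto_const c])
      then have "filterlim (\<lambda>t. (1 + \<mu>/k) + (V 0 - \<mu>/k) * exp (0 + (- k) * t)) at_top at_top"
        by (rule filterlim_tendsto_add_at_top[OF tendsto_const])
      then show ?thesis
      proof (rule filterlim_cong[THEN iffD1, OF refl refl, rotated])
        show "eventually (\<lambda>t. (1 + \<mu>/k) + (V 0 - \<mu>/k) * exp (0 + (- k) * t) = 1 + V t) at_top"
          using eventually_ge_at_top[of 0]
        proof (rule eventually_mono)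
          fix t :: real assume "t \<ge> 0" then show "(1 + \<mu>/k) + (V 0 - \<mu>/k) * exp (0 + (- k) * t) = 1 + V t"
            using V_form[OF S0 kn, of t] by simp
        qed
      qed
    qed
    have "((\<lambda>t. inverse (1 + V t)) \<longlongrightarrow> 0) at_top" by (rule tendsto_inverse_0_at_top[OF lim])
    then show ?thesis
    proof (rule tendsto_cong[THEN iffD1, rotated])
      show "eventually (\<lambda>t. inverse (1 + V t) = S t) at_top"
        using eventually_ge_at_top[of 0]
      proof (rule eventually_mono)
        fix t :: real assume "t \<ge> 0" then show "inverse (1 + V t) = S t"
          using S_V[OF S0, of t] by (simp add: divide_inverse)
      qed
    qed
  qed
qed


lemma b_pos: "b > 0" using pos by (simp add: b_def)

context
  assumes S0: "S 0 > 0" and kp: "k > 0"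
begin

lemma sstar: "k / b = 1 / (1 + \<mu>/k)"
  using kp b_pos by (simp add: k_def field_simps)

lemma b_S_lim: "(S \<longlongrightarrow> k / b) at_top"
proof -
  have "((\<lambda>t. exp (0 - k * t)) \<longlongrightarrow> 0) at_top" by (rule exp_decay[OF kp])
  then have "((\<lambda>t. 1 / (1 + (\<mu>/k + (V 0 - \<mu>/k) * exp (0 - k * t)))) \<longlongrightarrow> 1 / (1 + (\<mu>/k + (V 0 - \<mu>/k) * 0))) at_top"
    using kp pos by (intro tendsto_intros) (auto simp: add_pos_pos add_nonneg_eq_0_iff)
  then have "((\<lambda>t. 1 / (1 + (\<mu>/k + (V 0 - \<mu>/k) * exp (0 - k * t)))) \<longlongrightarrow> k / b) at_top"
    by (simp add: sstar)
  then show ?thesis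
  proof (rule tendsto_cong[THEN iffD1, rotated])
    show "eventually (\<lambda>t. 1 / (1 + (\<mu>/k + (V 0 - \<mu>/k) * exp (0 - k * t))) = S t) at_top"
      using eventually_ge_at_top[of 0]
    proof (rule eventually_mono)
      fix t :: real assume "t \<ge> 0" then show "1 / (1 + (\<mu>/k + (V 0 - \<mu>/k) * exp (0 - k * t))) = S t"
        using S_V[OF S0, of t] V_form[OF S0 _, of t] kp by simp
    qed
  qed
qed

lemma b_S_stab: assumes t: "t \<ge> 0" shows "\<bar>S t - k / b\<bar> \<le> \<bar>S 0 - k / b\<bar> / S 0"
proof -
  have kn: "k \<noteq> 0" using kp by simp
  have Vt: "V t \<ge> 0" using V_nonneg[OF S0 t] .
  have mk: "\<mu>/k > 0" using pos kp by simp
  have e1: "S t - k / b = (\<mu>/k - V t) * S t * (k / b)"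
    using Vt mk by (simp add: S_V[OF S0 t] sstar field_simps)
  have e2: "\<bar>V t - \<mu>/k\<bar> \<le> \<bar>V 0 - \<mu>/k\<bar>"
  proof -
    have "\<bar>V t - \<mu>/k\<bar> = \<bar>V 0 - \<mu>/k\<bar> * exp (- k * t)"
      using V_form[OF S0 kn t] by (simp add: abs_mult)
    also have "\<dots> \<le> \<bar>V 0 - \<mu>/k\<bar> * 1" using kp t by (intro mult_left_mono) auto
    finally show ?thesis by simp
  qed
  have e3: "\<bar>V 0 - \<mu>/k\<bar> * (k / b) = \<bar>S 0 - k / b\<bar> / S 0"
  proof -
    have "(V 0 - \<mu>/k) * (k / b) = (k / b - S 0) / S 0"
      using S0 kp b_pos by (simp add: V_def k_def field_simps)
    then have "\<bar>V 0 - \<mu>/k\<bar> * \<bar>k / b\<bar> = \<bar>k / b - S 0\<bar> / \<bar>S 0\<bar>"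
      by (metis abs_mult abs_divide)
    then show ?thesis using S0 kp b_pos by (simp add: abs_minus_commute)
  qed
  have "\<bar>S t - k / b\<bar> = \<bar>V t - \<mu>/k\<bar> * S t * (k / b)"
    using e1 Spos[OF S0 t] kp b_pos by (simp add: abs_mult abs_minus_commute)
  also have "\<dots> \<le> \<bar>V 0 - \<mu>/k\<bar> * 1 * (k / b)"
    using e2 S_le1[OF S0 t] Spos[OF S0 t] kp b_pos
    by (intro mult_right_mono mult_mono) auto
  finally show ?thesis using e3 by simp
qed

lemma b_D_lim: "(D \<longlongrightarrow> 0) at_top"
proof -
  define c0 where "c0 = \<mu> / (2 * b)"
  have c0: "c0 > 0" using pos b_pos by (simp add: c0_def)
  have "k / b < k / b + c0" using c0 by simp
  then have "eventually (\<lambda>t. S t < k / b + c0) at_top"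
    using b_S_lim order_tendstoD(2) by blast
  then obtain T0 where T0: "\<And>t. t \<ge> T0 \<Longrightarrow> S t < k / b + c0"
    by (auto simp: eventually_at_top_linorder)
  define T where "T = max T0 0"
  have T: "T \<ge> 0" "\<And>t. t \<ge> T \<Longrightarrow> 1 - S t \<ge> c0"
  proof -
    show "T \<ge> 0" by (simp add: T_def)
    fix t assume "t \<ge> T"
    then have "S t < k / b + c0" using T0 by (simp add: T_def)
    moreover have "k / b + c0 + c0 = 1" using b_pos by (simp add: c0_def k_def field_simps)
    ultimately show "1 - S t \<ge> c0" by linarith
  qed
  have qT: "q t = q T * exp (integral {T..t} (\<lambda>s. - 2 * \<gamma> * (1 - S s)))" if t: "t \<ge> T" for t
  proof (rule mult_form[OF _ _ t])
    fix s assume s: "s \<ge> T"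
    have "(q has_real_derivative q s * (- 2 * \<gamma> * (1 - S s))) (at s within {0..})"
      using dq[OF S0, of s] T(1) s by simp
    then show "(q has_real_derivative q s * (- 2 * \<gamma> * (1 - S s))) (at s within {T..})"
      by (rule has_field_derivative_subset) (use T(1) in auto)
  next
    show "continuous_on {T..} (\<lambda>s. - 2 * \<gamma> * (1 - S s))"
      using T(1) by (intro continuous_intros continuous_on_subset[OF contS]) auto
  qed
  have int_le: "integral {T..t} (\<lambda>s. - 2 * \<gamma> * (1 - S s)) \<le> - 2 * \<gamma> * c0 * (t - T)" if t: "t \<ge> T" for t
  proof -
    have c: "continuous_on {T..t} (\<lambda>s. - 2 * \<gamma> * (1 - S s))"
      using T(1) by (intro continuous_intros continuous_on_subset[OF contS]) auto
    have "integral {T..t} (\<lambda>s. - 2 * \<gamma> * (1 - S s)) \<le> integral {T..t} (\<lambda>s. - 2 * \<gamma> * c0)"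
      by (rule integral_le) (use integrable_continuous_interval[OF c] T(2) pos in auto)
    then show ?thesis using t by (simp add: algebra_simps)
  qed
  have bound: "\<bar>D t\<bar> \<le> \<bar>q T\<bar> * exp ((2 * \<gamma> * c0 * T) - (2 * \<gamma> * c0) * t)" if t: "t \<ge> T" for t
  proof -
    have t0: "t \<ge> 0" using t T(1) by simp
    have "D t = q t * S t" using Spos[OF S0 t0] by (simp add: q_def[OF S0])
    then have "\<bar>D t\<bar> \<le> \<bar>q t\<bar> * 1"
      using S_le1[OF S0 t0] Spos[OF S0 t0] by (simp add: abs_mult mult_left_le)
    also have "\<dots> = \<bar>q T\<bar> * exp (integral {T..t} (\<lambda>s. - 2 * \<gamma> * (1 - S s)))"
      using qT[OF t] by (simp add: abs_mult)
    also have "\<dots> \<le> \<bar>q T\<bar> * exp ((2 * \<gamma> * c0 * T) - (2 * \<gamma> * c0) * t)"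
      using int_le[OF t] by (intro mult_left_mono) (auto simp: algebra_simps)
    finally show ?thesis .
  qed
  have "((\<lambda>t. \<bar>q T\<bar> * exp ((2 * \<gamma> * c0 * T) - (2 * \<gamma> * c0) * t)) \<longlongrightarrow> \<bar>q T\<bar> * 0) at_top"
    using pos c0 by (intro tendsto_intros exp_decay) auto
  then have lim0: "((\<lambda>t. \<bar>q T\<bar> * exp ((2 * \<gamma> * c0 * T) - (2 * \<gamma> * c0) * t)) \<longlongrightarrow> 0) at_top" by simp
  have ev: "eventually (\<lambda>t. norm (D t) \<le> \<bar>q T\<bar> * exp ((2 * \<gamma> * c0 * T) - (2 * \<gamma> * c0) * t)) at_top"
    using eventually_ge_at_top[of T] by (rule eventually_mono) (simp add: bound)
  show ?thesis by (rule Lim_null_comparison[OF ev lim0])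
qed

end

end


lemma dist_le_sum: fixes p q :: "real \<times> real" shows "dist p q \<le> \<bar>fst p - fst q\<bar> + \<bar>snd p - snd q\<bar>"
proof -
  obtain a b c d where pq: "p = (a, b)" "q = (c, d)" by (cases p, cases q) auto
  have "dist p q = sqrt ((a - c)^2 + (b - d)^2)" by (simp add: pq dist_Pair_Pair dist_real_def)
  also have "\<dots> \<le> sqrt ((\<bar>a - c\<bar> + \<bar>b - d\<bar>)^2)"
    by (intro real_sqrt_le_mono) (simp add: power2_eq_square algebra_simps)
  also have "\<dots> = \<bar>a - c\<bar> + \<bar>b - d\<bar>" by simp
  finally show ?thesis by (simp add: pq)
qed

context sol
begin

lemma L_fun: "L = (\<lambda>t. fst (x t))" by (rule ext) (simp add: L_def)
lemma R_fun: "R = (\<lambda>t. snd (x t))" by (rule ext) (simp add: R_def)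

lemma LR_bounds: assumes "t \<ge> 0" shows "L t \<ge> 0" "R t \<ge> 0" "L t \<le> S t" "R t \<le> S t"
  using in_Sigma[OF assms] x_eq[of t] by (auto simp: Sigma_simplex_def S_def)

lemma dist0_le_S: assumes "t \<ge> 0" shows "dist (x t) (0, 0) \<le> S t"
  using dist_le_sum[of "x t" "(0,0)"] LR_bounds[OF assms] by (simp add: L_def R_def S_def)

lemma a_LR_lim: assumes "k \<le> 0" shows "(L \<longlongrightarrow> 0) at_top" "(R \<longlongrightarrow> 0) at_top"
proof -
  have ev: "eventually (\<lambda>t::real. t \<ge> 0) at_top" by (rule eventually_ge_at_top[of 0])
  have e1: "eventually (\<lambda>t. 0 \<le> L t) at_top" using ev by (rule eventually_mono) (rule LR_bounds(1))
  have e2: "eventually (\<lambda>t. 0 \<le> R t) at_top" using ev by (rule eventually_mono) (rule LR_bounds(2))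
  have e3: "eventually (\<lambda>t. L t \<le> S t) at_top" using ev by (rule eventually_mono) (rule LR_bounds(3))
  have e4: "eventually (\<lambda>t. R t \<le> S t) at_top" using ev by (rule eventually_mono) (rule LR_bounds(4))
  show "(L \<longlongrightarrow> 0) at_top"
    by (rule tendsto_sandwich[OF e1 e3 tendsto_const a_lim[OF assms]])
  show "(R \<longlongrightarrow> 0) at_top"
    by (rule tendsto_sandwich[OF e2 e4 tendsto_const a_lim[OF assms]])
qed

lemma b_LR_lim: assumes "S 0 > 0" "k > 0" shows "(L \<longlongrightarrow> k / b / 2) at_top" "(R \<longlongrightarrow> k / b / 2) at_top"
proof -
  have L2: "L = (\<lambda>t. (S t + D t) / 2)" "R = (\<lambda>t. (S t - D t) / 2)" by (auto simp: LR)
  have "((\<lambda>t. (S t + D t) / 2) \<longlongrightarrow> (k / b + 0) / 2) at_top"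
    by (intro tendsto_intros b_S_lim b_D_lim assms) auto
  then show "(L \<longlongrightarrow> k / b / 2) at_top" by (simp add: L2)
  have "((\<lambda>t. (S t - D t) / 2) \<longlongrightarrow> (k / b - 0) / 2) at_top"
    by (intro tendsto_intros b_S_lim b_D_lim assms) auto
  then show "(R \<longlongrightarrow> k / b / 2) at_top" by (simp add: L2)
qed

end


lemma part1:
  fixes \<alpha> \<mu> \<gamma> :: real
  assumes pos: "\<alpha> > 0" "\<mu> > 0" "\<gamma> > 0" and le: "\<alpha> + \<gamma> \<le> \<mu>"
  shows "GAS_on \<alpha> \<mu> \<gamma> Sigma_simplex (0, 0) \<and>
           (\<forall>x. is_solution \<alpha> \<mu> \<gamma> x \<and> x 0 \<in> Sigma_simplex \<longrightarrow>
               ((\<lambda>t. fst (x t)) \<longlongrightarrow> 0) at_top \<and>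
               ((\<lambda>t. snd (x t)) \<longlongrightarrow> 0) at_top \<and>
               ((\<lambda>t. 1 - fst (x t) - snd (x t)) \<longlongrightarrow> 1) at_top)"
proof -
  have lim: "((\<lambda>t. fst (x t)) \<longlongrightarrow> 0) at_top \<and> ((\<lambda>t. snd (x t)) \<longlongrightarrow> 0) at_top"
    if h: "is_solution \<alpha> \<mu> \<gamma> x" "x 0 \<in> Sigma_simplex" for x
  proof -
    interpret sol \<alpha> \<mu> \<gamma> x using pos h by unfold_locales auto
    have "k \<le> 0" using le by (simp add: k_def b_def)
    from a_LR_lim[OF this] show ?thesis by (simp add: L_fun R_fun)
  qed
  have vf0: "vf \<alpha> \<mu> \<gamma> (0, 0) = 0" by (simp add: vf_def zero_prod_def)
  have stab: "stable_on \<alpha> \<mu> \<gamma> Sigma_simplex (0, 0)"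
    unfolding stable_on_def
  proof (intro allI impI)
    fix \<epsilon> :: real assume e: "\<epsilon> > 0"
    show "\<exists>\<delta>>0. \<forall>x. is_solution \<alpha> \<mu> \<gamma> x \<and> x 0 \<in> Sigma_simplex \<and> dist (x 0) (0, 0) < \<delta> \<longrightarrow>
            (\<forall>t\<ge>0. dist (x t) (0, 0) < \<epsilon>)"
    proof (intro exI[of _ "\<epsilon> / 2"] conjI allI impI)
      show "\<epsilon> / 2 > 0" using e by simp
      fix x t assume h: "is_solution \<alpha> \<mu> \<gamma> x \<and> x 0 \<in> Sigma_simplex \<and> dist (x 0) (0, 0) < \<epsilon> / 2"
        and t: "(t::real) \<ge> 0"
      interpret sol \<alpha> \<mu> \<gamma> x using pos h by unfold_locales auto
      have k: "k \<le> 0" using le by (simp add: k_def b_def)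
      have "\<bar>fst (x 0) - fst (0::real, 0::real)\<bar> \<le> dist (x 0) (0, 0)"
        using dist_fst_le[of "x 0" "(0,0)"] by (simp add: dist_real_def)
      moreover have "\<bar>snd (x 0) - snd (0::real, 0::real)\<bar> \<le> dist (x 0) (0, 0)"
        using dist_snd_le[of "x 0" "(0,0)"] by (simp add: dist_real_def)
      ultimately have "S 0 \<le> 2 * dist (x 0) (0, 0)"
        using LR_bounds[of 0] by (simp add: S_def L_def R_def)
      then show "dist (x t) (0, 0) < \<epsilon>"
        using dist0_le_S[OF t] a_mono[OF k t] h by linarith
    qed
  qed
  have attr: "attractive_on \<alpha> \<mu> \<gamma> Sigma_simplex (0, 0)"
    unfolding attractive_on_def
  proof (intro allI impI)
    fix x assume h: "is_solution \<alpha> \<mu> \<gamma> x \<and> x 0 \<in> Sigma_simplex"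
    have "((\<lambda>t. (fst (x t), snd (x t))) \<longlongrightarrow> (0, 0)) at_top"
      using lim[of x] h by (intro tendsto_Pair) auto
    then show "(x \<longlongrightarrow> (0, 0)) at_top" by simp
  qed
  have rest: "\<forall>x. is_solution \<alpha> \<mu> \<gamma> x \<and> x 0 \<in> Sigma_simplex \<longrightarrow>
               ((\<lambda>t. fst (x t)) \<longlongrightarrow> 0) at_top \<and>
               ((\<lambda>t. snd (x t)) \<longlongrightarrow> 0) at_top \<and>
               ((\<lambda>t. 1 - fst (x t) - snd (x t)) \<longlongrightarrow> 1) at_top"
  proof (intro allI impI)
    fix x assume h: "is_solution \<alpha> \<mu> \<gamma> x \<and> x 0 \<in> Sigma_simplex"
    then have l: "((\<lambda>t. fst (x t)) \<longlongrightarrow> 0) at_top" "((\<lambda>t. snd (x t)) \<longlongrightarrow> 0) at_top"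
      using lim[of x] by auto
    have "((\<lambda>t. 1 - fst (x t) - snd (x t)) \<longlongrightarrow> 1 - 0 - 0) at_top"
      by (intro tendsto_intros l)
    then show "((\<lambda>t. fst (x t)) \<longlongrightarrow> 0) at_top \<and> ((\<lambda>t. snd (x t)) \<longlongrightarrow> 0) at_top \<and>
               ((\<lambda>t. 1 - fst (x t) - snd (x t)) \<longlongrightarrow> 1) at_top" using l by simp
  qed
  show ?thesis using vf0 stab attr rest by (simp add: GAS_on_def)
qed


lemma part2_set:
  fixes \<alpha> \<mu> \<gamma> :: real
  assumes pos: "\<alpha> > 0" "\<mu> > 0" "\<gamma> > 0" and gt: "\<mu> < \<alpha> + \<gamma>"
  shows "{e \<in> interior Sigma_simplex. vf \<alpha> \<mu> \<gamma> e = 0} =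
         {((1 - \<mu> / (\<alpha> + \<gamma>)) / 2, (1 - \<mu> / (\<alpha> + \<gamma>)) / 2)}"
proof -
  define b where "b = \<alpha> + \<gamma>"
  define P where "P = (1 - \<mu> / b) / 2"
  have bpos: "b > 0" using pos by (simp add: b_def)
  have Ppos: "P > 0" using gt bpos by (simp add: P_def b_def field_simps)
  have P1: "2 * P < 1" using pos bpos by (simp add: P_def)
  have C: "1 - P - P = \<mu> / b" by (simp add: P_def)
  have "open {p :: real \<times> real. 0 < fst p \<and> 0 < snd p \<and> fst p + snd p < 1}"
  proof -
    have "{p :: real \<times> real. 0 < fst p \<and> 0 < snd p \<and> fst p + snd p < 1}
          = {p. 0 < fst p} \<inter> {p. 0 < snd p} \<inter> {p. fst p + snd p < 1}" by auto
    also have "open \<dots>"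
      by (intro open_Int open_Collect_less continuous_intros)
    finally show ?thesis .
  qed
  moreover have "{p :: real \<times> real. 0 < fst p \<and> 0 < snd p \<and> fst p + snd p < 1} \<subseteq> Sigma_simplex"
    by (auto simp: Sigma_simplex_def)
  ultimately have sub: "{p :: real \<times> real. 0 < fst p \<and> 0 < snd p \<and> fst p + snd p < 1} \<subseteq> interior Sigma_simplex"
    by (intro interior_maximal)
  have PP: "(P, P) \<in> interior Sigma_simplex" using sub Ppos P1 by auto
  have vfP: "vf \<alpha> \<mu> \<gamma> (P, P) = 0"
  proof -
    have "\<alpha> * P * (1 - P - P) - \<mu> * P + \<gamma> * P * (1 - P - P) = P * (b * (1 - P - P) - \<mu>)"
      by (simp add: b_def algebra_simps)
    also have "\<dots> = 0" using C bpos by simp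
    finally show ?thesis by (simp add: vf_def zero_prod_def)
  qed
  have uniq: "e = (P, P)" if e: "e \<in> interior Sigma_simplex" "vf \<alpha> \<mu> \<gamma> e = 0" for e
  proof -
    obtain l r where lr: "e = (l, r)" by (cases e)
    have inS: "l \<ge> 0" "r \<ge> 0" "l + r \<le> 1"
      using interior_subset[of Sigma_simplex] e(1) lr by (auto simp: Sigma_simplex_def)
    have ne: "e \<noteq> (0, 0)"
    proof
      assume "e = (0, 0)"
      then obtain \<epsilon> where eps: "\<epsilon> > 0" "ball (0, 0) \<epsilon> \<subseteq> Sigma_simplex"
        using e(1) mem_interior by blast
      have "(- \<epsilon> / 2, 0) \<in> ball (0::real, 0::real) \<epsilon>"
        using eps by (simp add: dist_Pair_Pair dist_real_def)
      then show False using eps by (auto simp: Sigma_simplex_def subset_eq dest!: bspec[of _ _ "(- \<epsilon> / 2, 0)"])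
    qed
    have spos: "l + r > 0" using ne inS lr by auto
    have E1: "\<alpha> * l * (1 - l - r) - \<mu> * l + \<gamma> * r * (1 - l - r) = 0"
      and E2: "\<alpha> * r * (1 - l - r) - \<mu> * r + \<gamma> * l * (1 - l - r) = 0"
      using e(2) lr by (simp_all add: vf_def zero_prod_def Let_def)
    have "(l + r) * (b * (1 - l - r) - \<mu>) = (\<alpha> * l * (1 - l - r) - \<mu> * l + \<gamma> * r * (1 - l - r)) + (\<alpha> * r * (1 - l - r) - \<mu> * r + \<gamma> * l * (1 - l - r))"
      by (simp add: b_def algebra_simps)
    then have "(l + r) * (b * (1 - l - r) - \<mu>) = 0" using E1 E2 by simp
    then have "l + r = 0 \<or> b * (1 - l - r) - \<mu> = 0" by (simp only: mult_eq_0_iff)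
    then have Cb: "b * (1 - l - r) = \<mu>" using spos by (elim disjE) linarith+
    have "(l - r) * ((\<alpha> - \<gamma>) * (1 - l - r) - \<mu>) = (\<alpha> * l * (1 - l - r) - \<mu> * l + \<gamma> * r * (1 - l - r)) - (\<alpha> * r * (1 - l - r) - \<mu> * r + \<gamma> * l * (1 - l - r))"
      by (simp add: algebra_simps)
    then have "(l - r) * ((\<alpha> - \<gamma>) * (1 - l - r) - \<mu>) = 0" using E1 E2 by simp
    moreover have "b * ((\<alpha> - \<gamma>) * (1 - l - r) - \<mu>) = - 2 * \<gamma> * \<mu>"
    proof -
      have "b * ((\<alpha> - \<gamma>) * (1 - l - r) - \<mu>) = (\<alpha> - \<gamma>) * (b * (1 - l - r)) - b * \<mu>"
        by (simp add: algebra_simps)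
      also have "\<dots> = (\<alpha> - \<gamma>) * \<mu> - b * \<mu>" by (simp only: Cb)
      also have "\<dots> = - 2 * \<gamma> * \<mu>" by (simp add: b_def algebra_simps)
      finally show ?thesis .
    qed
    then have "(\<alpha> - \<gamma>) * (1 - l - r) - \<mu> \<noteq> 0" using pos by auto
    ultimately have "l - r = 0" by (simp only: mult_eq_0_iff) simp
    then have "l = r" by simp
    then have "l = P" using Cb bpos by (simp add: P_def field_simps)
    then show ?thesis using lr \<open>l = r\<close> by simp
  qed
  have "{e \<in> interior Sigma_simplex. vf \<alpha> \<mu> \<gamma> e = 0} = {(P, P)}" using PP vfP uniq by blast
  then show ?thesis by (simp only: P_def b_def)
qed


lemma part2_gas:
  fixes \<alpha> \<mu> \<gamma> :: real
  assumes pos: "\<alpha> > 0" "\<mu> > 0" "\<gamma> > 0" and gt: "\<mu> < \<alpha> + \<gamma>"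
  shows "GAS_on \<alpha> \<mu> \<gamma> (Sigma_simplex - {(0, 0)})
           ((1 - \<mu> / (\<alpha> + \<gamma>)) / 2, (1 - \<mu> / (\<alpha> + \<gamma>)) / 2)"
proof -
  define P where "P = (1 - \<mu> / (\<alpha> + \<gamma>)) / 2"
  have bpos: "\<alpha> + \<gamma> > 0" using pos by simp
  have Ppos: "P > 0" using gt bpos by (simp add: P_def field_simps)
  have C: "1 - P - P = \<mu> / (\<alpha> + \<gamma>)" by (simp add: P_def)
  have vfP: "vf \<alpha> \<mu> \<gamma> (P, P) = 0"
  proof -
    have "\<alpha> * P * (1 - P - P) - \<mu> * P + \<gamma> * P * (1 - P - P) = P * ((\<alpha> + \<gamma>) * (1 - P - P) - \<mu>)"
      by (simp add: algebra_simps)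
    also have "\<dots> = 0" using C bpos by simp
    finally show ?thesis by (simp add: vf_def zero_prod_def Let_def)
  qed
  have stab: "stable_on \<alpha> \<mu> \<gamma> (Sigma_simplex - {(0, 0)}) (P, P)"
    unfolding stable_on_def
  proof (intro allI impI)
    fix \<epsilon> :: real assume e: "\<epsilon> > 0"
    define \<delta> where "\<delta> = min (P / 2) (\<epsilon> * P / 8)"
    have dpos: "\<delta> > 0" using e Ppos by (simp add: \<delta>_def)
    show "\<exists>\<delta>>0. \<forall>x. is_solution \<alpha> \<mu> \<gamma> x \<and> x 0 \<in> Sigma_simplex - {(0, 0)} \<and> dist (x 0) (P, P) < \<delta> \<longrightarrow>
            (\<forall>t\<ge>0. dist (x t) (P, P) < \<epsilon>)"
    proof (intro exI[of _ \<delta>] conjI allI impI dpos)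
      fix x t assume h: "is_solution \<alpha> \<mu> \<gamma> x \<and> x 0 \<in> Sigma_simplex - {(0, 0)} \<and> dist (x 0) (P, P) < \<delta>"
        and t: "(t::real) \<ge> 0"
      interpret sol \<alpha> \<mu> \<gamma> x using pos h by unfold_locales auto
      have kb: "k / b = 2 * P" using bpos by (simp add: k_def b_def P_def field_simps)
      have kp: "k > 0" using gt by (simp add: k_def b_def)
      have l0: "\<bar>L 0 - P\<bar> \<le> dist (x 0) (P, P)"
        using dist_fst_le[of "x 0" "(P,P)"] by (simp add: dist_real_def L_def)
      have r0: "\<bar>R 0 - P\<bar> \<le> dist (x 0) (P, P)"
        using dist_snd_le[of "x 0" "(P,P)"] by (simp add: dist_real_def R_def)
      have A: "\<bar>S 0 - 2 * P\<bar> \<le> 2 * \<delta>" using l0 r0 h by (simp add: S_def abs_le_iff)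
      have B: "\<bar>D 0\<bar> \<le> 2 * \<delta>" using l0 r0 h by (simp add: D_def abs_le_iff)
      have "2 * \<delta> \<le> P" by (simp add: \<delta>_def)
      then have S0: "S 0 \<ge> P" using A by (simp add: abs_le_iff)
      then have S0p: "S 0 > 0" using Ppos by simp
      define z where "z = 2 * \<delta> / P"
      have St: "\<bar>S t - 2 * P\<bar> \<le> z"
      proof -
        have "\<bar>S t - 2 * P\<bar> \<le> \<bar>S 0 - 2 * P\<bar> / S 0" using b_S_stab[OF S0p kp t] kb by simp
        also have "\<dots> \<le> 2 * \<delta> / P" using A S0 Ppos by (intro frac_le) auto
        finally show ?thesis by (simp add: z_def)
      qed
      have Dt: "\<bar>D t\<bar> \<le> z"
      proof -
        have "\<bar>D t\<bar> \<le> S t * \<bar>q 0\<bar>" by (rule D_bound[OF S0p t])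
        also have "\<dots> \<le> 1 * \<bar>q 0\<bar>" using S_le1[OF S0p t] by (intro mult_right_mono) auto
        also have "\<bar>q 0\<bar> = \<bar>D 0\<bar> / S 0" using S0p by (simp add: q_def[OF S0p])
        also have "\<dots> \<le> 2 * \<delta> / P" using B S0 Ppos by (intro frac_le) auto
        finally show ?thesis by (simp add: z_def)
      qed
      have "dist (x t) (P, P) \<le> \<bar>L t - P\<bar> + \<bar>R t - P\<bar>"
        using dist_le_sum[of "x t" "(P, P)"] by (simp add: L_def R_def)
      also have "\<dots> \<le> z + z"
      proof -
        have s1: "S t - 2 * P \<le> z" "2 * P - S t \<le> z" using St by (simp_all add: abs_le_iff)
        have d1: "D t \<le> z" "- D t \<le> z" using Dt by (simp_all add: abs_le_iff)
        have "L t - P \<le> z" using s1 d1 LR(1)[of t] by (simp add: field_simps)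
        moreover have "P - L t \<le> z" using s1 d1 LR(1)[of t] by (simp add: field_simps)
        ultimately have l: "\<bar>L t - P\<bar> \<le> z" by (simp add: abs_le_iff)
        have "R t - P \<le> z" using s1 d1 LR(2)[of t] by (simp add: field_simps)
        moreover have "P - R t \<le> z" using s1 d1 LR(2)[of t] by (simp add: field_simps)
        ultimately have "\<bar>R t - P\<bar> \<le> z" by (simp add: abs_le_iff)
        with l
        show ?thesis by linarith
      qed
      also have "\<dots> = 4 * \<delta> / P" by (simp add: z_def)
      also have "\<dots> \<le> \<epsilon> / 2"
      proof -
        have "\<delta> \<le> \<epsilon> * P / 8" by (simp add: \<delta>_def)
        then show ?thesis using Ppos by (simp add: field_simps)
      qed
      also have "\<dots> < \<epsilon>" using e by simp
      finally show "dist (x t) (P, P) < \<epsilon>" .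
    qed
  qed
  have attr: "attractive_on \<alpha> \<mu> \<gamma> (Sigma_simplex - {(0, 0)}) (P, P)"
    unfolding attractive_on_def
  proof (intro allI impI)
    fix x assume h: "is_solution \<alpha> \<mu> \<gamma> x \<and> x 0 \<in> Sigma_simplex - {(0, 0)}"
    interpret sol \<alpha> \<mu> \<gamma> x using pos h by unfold_locales auto
    have kb: "k / b / 2 = P" using bpos by (simp add: k_def b_def P_def field_simps)
    have kp: "k > 0" using gt by (simp add: k_def b_def)
    have "x 0 \<noteq> (0, 0)" using h by auto
    then have "S 0 \<noteq> 0" using LR_bounds[of 0] x_eq[of 0] by (auto simp: S_def)
    then have S0p: "S 0 > 0" using LR_bounds[of 0] by (simp add: S_def)
    have "((\<lambda>t. (L t, R t)) \<longlongrightarrow> (P, P)) at_top"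
      using b_LR_lim[OF S0p kp] kb by (intro tendsto_Pair) auto
    then show "(x \<longlongrightarrow> (P, P)) at_top" by (simp add: L_def R_def)
  qed
  show ?thesis using vfP stab attr by (simp add: GAS_on_def P_def)
qed


lemma logi_alg:
  fixes G A B E kk b \<mu> :: real
  assumes "G \<noteq> 0" "G = A + B * E" "kk * A = b" "b = kk + \<mu>"
  shows "(0 * G - 1 * (B * (E * (- kk)))) / (G * G) = 1 / G * (b * (1 - 1 / G) - \<mu>)"
proof -
  have "b * (G - 1) - \<mu> * G = kk * G - b" using assms(4) by (simp add: algebra_simps)
  also have "\<dots> = kk * B * E" using assms(2,3) by (simp add: algebra_simps)
  finally have h: "b * (G - 1) - \<mu> * G = kk * B * E" .
  have "1 / G * (b * (1 - 1 / G) - \<mu>) = (b * (G - 1) - \<mu> * G) / (G * G)"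
    using assms(1) by (simp add: field_simps)
  also have "\<dots> = kk * B * E / (G * G)" by (simp only: h)
  also have "kk * B * E = 0 * G - 1 * (B * (E * (- kk)))" by (simp add: algebra_simps)
  finally show ?thesis by (rule sym)
qed

lemma part2_unst:
  fixes \<alpha> \<mu> \<gamma> :: real
  assumes pos: "\<alpha> > 0" "\<mu> > 0" "\<gamma> > 0" and gt: "\<mu> < \<alpha> + \<gamma>"
  shows "\<not> stable_on \<alpha> \<mu> \<gamma> Sigma_simplex (0, 0)"
proof
  assume st: "stable_on \<alpha> \<mu> \<gamma> Sigma_simplex (0, 0)"
  define b where "b = \<alpha> + \<gamma>"
  define kk where "kk = b - \<mu>"
  have bpos: "b > 0" using pos by (simp add: b_def)
  have kk: "kk > 0" using gt by (simp add: kk_def b_def)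
  define s where "s = kk / b"
  have s: "s > 0" "s < 1" using kk bpos pos by (auto simp: s_def kk_def field_simps)
  have "s / 4 > 0" using s by simp
  from st[unfolded stable_on_def, rule_format, OF this] obtain \<delta> where
    dpos: "\<delta> > 0" and H: "\<And>x. is_solution \<alpha> \<mu> \<gamma> x \<and> x 0 \<in> Sigma_simplex \<and> dist (x 0) (0, 0) < \<delta> \<Longrightarrow>
        (\<forall>t\<ge>0. dist (x t) (0, 0) < s / 4)"
    by blast
  define s0 where "s0 = min \<delta> s / 2"
  have s0: "s0 > 0" "s0 < \<delta>" "s0 \<le> 1" using dpos s by (auto simp: s0_def)
  define A where "A = 1 + \<mu> / kk"
  define B where "B = 1 / s0 - A"
  define g where "g = (\<lambda>t. A + B * exp (- kk * t))"
  define \<sigma> where "\<sigma> = (\<lambda>t. 1 / g t)"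
  define y where "y = (\<lambda>t. (\<sigma> t / 2, \<sigma> t / 2))"
  have Apos: "A > 0" using pos kk by (simp add: A_def add_pos_pos)
  have kA: "kk * A = b" using kk by (simp add: A_def kk_def field_simps)
  have gpos: "g t > 0" if t: "t \<ge> 0" for t
  proof -
    have "g t = A * (1 - exp (- kk * t)) + exp (- kk * t) / s0"
      using s0 by (simp add: g_def B_def field_simps)
    moreover have "exp (- kk * t) \<le> 1" using kk t by simp
    ultimately show ?thesis using Apos s0 by (simp add: add_nonneg_pos)
  qed
  have \<sigma>0: "\<sigma> 0 = s0" by (simp add: \<sigma>_def g_def B_def)
  have d\<sigma>: "(\<sigma> has_real_derivative \<sigma> t * (b * (1 - \<sigma> t) - \<mu>)) (at t within {0..})" if t: "t \<ge> 0" for t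
  proof -
    have d1: "(g has_real_derivative B * (exp (- kk * t) * (- kk))) (at t within {0..})"
      unfolding g_def by (auto intro!: derivative_eq_intros)
    have ne: "g t \<noteq> 0" using gpos[OF t] by simp
    have "(\<sigma> has_real_derivative (0 * g t - 1 * (B * (exp (- kk * t) * (- kk)))) / (g t * g t)) (at t within {0..})"
      unfolding \<sigma>_def by (intro DERIV_divide DERIV_const d1 ne)
    moreover have "(0 * g t - 1 * (B * (exp (- kk * t) * (- kk)))) / (g t * g t) = \<sigma> t * (b * (1 - \<sigma> t) - \<mu>)"
      unfolding \<sigma>_def by (rule logi_alg[OF ne _ kA]) (simp_all add: g_def kk_def)
    ultimately show ?thesis by simp
  qed
  have sol: "is_solution \<alpha> \<mu> \<gamma> y"
    unfolding is_solution_def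
  proof (intro allI impI)
    fix t :: real assume t: "t \<ge> 0"
    have dh: "((\<lambda>t. \<sigma> t / 2) has_vector_derivative (\<sigma> t * (b * (1 - \<sigma> t) - \<mu>)) / 2) (at t within {0..})"
      unfolding has_real_derivative_iff_has_vector_derivative[symmetric]
      by (intro DERIV_cdivide d\<sigma> t)
    have "(y has_vector_derivative ((\<sigma> t * (b * (1 - \<sigma> t) - \<mu>)) / 2, (\<sigma> t * (b * (1 - \<sigma> t) - \<mu>)) / 2)) (at t within {0..})"
      unfolding y_def by (intro has_vector_derivative_Pair dh)
    moreover have "vf \<alpha> \<mu> \<gamma> (y t) = ((\<sigma> t * (b * (1 - \<sigma> t) - \<mu>)) / 2, (\<sigma> t * (b * (1 - \<sigma> t) - \<mu>)) / 2)"
      by (simp add: vf_def y_def Let_def b_def algebra_simps)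
    ultimately show "(y has_vector_derivative vf \<alpha> \<mu> \<gamma> (y t)) (at t within {0..})" by simp
  qed
  have y0: "y 0 \<in> Sigma_simplex" using s0 by (simp add: y_def \<sigma>0 Sigma_simplex_def)
  have "dist (y 0) (0, 0) \<le> \<bar>s0 / 2\<bar> + \<bar>s0 / 2\<bar>"
    using dist_le_sum[of "y 0" "(0, 0)"] by (simp add: y_def \<sigma>0)
  then have "dist (y 0) (0, 0) < \<delta>" using s0 by simp
  then have bound: "\<And>t. t \<ge> 0 \<Longrightarrow> dist (y t) (0, 0) < s / 4" using H[of y] sol y0 by blast
  have "((\<lambda>t. exp (0 - kk * t)) \<longlongrightarrow> 0) at_top" by (rule exp_decay[OF kk])
  then have "((\<lambda>t. 1 / (A + B * exp (0 - kk * t))) \<longlongrightarrow> 1 / (A + B * 0)) at_top"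
    using Apos by (intro tendsto_intros) auto
  moreover have "1 / (A + B * 0) = s" using kA[symmetric] kk Apos by (simp add: s_def)
  ultimately have lim: "(\<sigma> \<longlongrightarrow> s) at_top"
    by (simp add: \<sigma>_def g_def)
  have "s / 2 < s" using s by simp
  then have "eventually (\<lambda>t. s / 2 < \<sigma> t) at_top" using lim order_tendstoD(1) by blast
  then obtain N where N: "\<And>t. t \<ge> N \<Longrightarrow> s / 2 < \<sigma> t" by (auto simp: eventually_at_top_linorder)
  define t where "t = max N 0"
  have t: "t \<ge> 0" "s / 2 < \<sigma> t" using N by (auto simp: t_def)
  have "dist (\<sigma> t / 2) 0 \<le> dist (y t) (0, 0)"
    using dist_fst_le[of "y t" "(0, 0)"] by (simp add: y_def)
  then have "\<sigma> t / 2 < s / 4" using bound[OF t(1)] t s by (simp add: dist_real_def)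
  then show False using t(2) by simp
qed


theorem theorem3p4:
  fixes \<alpha> \<mu> \<gamma> :: real
  assumes "\<alpha> > 0" and "\<mu> > 0" and "\<gamma> > 0"
  defines "\<beta> \<equiv> \<alpha> + \<gamma>"
  shows "(\<beta> \<le> \<mu> \<longrightarrow>
           GAS_on \<alpha> \<mu> \<gamma> Sigma_simplex (0, 0) \<and>
           (\<forall>x. is_solution \<alpha> \<mu> \<gamma> x \<and> x 0 \<in> Sigma_simplex \<longrightarrow>
               ((\<lambda>t. fst (x t)) \<longlongrightarrow> 0) at_top \<and>
               ((\<lambda>t. snd (x t)) \<longlongrightarrow> 0) at_top \<and>
               ((\<lambda>t. 1 - fst (x t) - snd (x t)) \<longlongrightarrow> 1) at_top)) \<and>
         (\<beta> > \<mu> \<longrightarrow>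
           (let P = (1 - \<mu> / \<beta>) / 2 in
              1 - 2 * P = \<mu> / \<beta> \<and>
              {e \<in> interior Sigma_simplex. vf \<alpha> \<mu> \<gamma> e = 0} = {(P, P)} \<and>
              GAS_on \<alpha> \<mu> \<gamma> (Sigma_simplex - {(0, 0)}) (P, P) \<and>
              \<not> stable_on \<alpha> \<mu> \<gamma> Sigma_simplex (0, 0)))"
  unfolding \<beta>_def Let_def
proof (intro conjI impI)
  assume le: "\<alpha> + \<gamma> \<le> \<mu>"
  note p1 = part1[OF assms(1,2,3) le]
  show "GAS_on \<alpha> \<mu> \<gamma> Sigma_simplex (0, 0)" using p1 by blast
  show "\<forall>x. is_solution \<alpha> \<mu> \<gamma> x \<and> x 0 \<in> Sigma_simplex \<longrightarrow>
               ((\<lambda>t. fst (x t)) \<longlongrightarrow> 0) at_top \<and>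
               ((\<lambda>t. snd (x t)) \<longlongrightarrow> 0) at_top \<and>
               ((\<lambda>t. 1 - fst (x t) - snd (x t)) \<longlongrightarrow> 1) at_top" using p1 by blast
next
  assume gt: "\<mu> < \<alpha> + \<gamma>"
  show "1 - 2 * ((1 - \<mu> / (\<alpha> + \<gamma>)) / 2) = \<mu> / (\<alpha> + \<gamma>)" using assms(1,3) by (simp add: field_simps add_pos_pos)
  show "{e \<in> interior Sigma_simplex. vf \<alpha> \<mu> \<gamma> e = 0} =
         {((1 - \<mu> / (\<alpha> + \<gamma>)) / 2, (1 - \<mu> / (\<alpha> + \<gamma>)) / 2)}"
    by (rule part2_set[OF assms(1,2,3) gt])
  show "GAS_on \<alpha> \<mu> \<gamma> (Sigma_simplex - {(0, 0)})
           ((1 - \<mu> / (\<alpha> + \<gamma>)) / 2, (1 - \<mu> / (\<alpha> + \<gamma>)) / 2)"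
    by (rule part2_gas[OF assms(1,2,3) gt])
  show "\<not> stable_on \<alpha> \<mu> \<gamma> Sigma_simplex (0, 0)"
    by (rule part2_unst[OF assms(1,2,3) gt])
qed

end
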